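(* Let $R$ be a topological ring and $M$ a locally compact left topological $R$-module that is finitely generated as an $R$-module. Then the Pontryagin dual $\widehat{M}$, with the right $R$-action $\chi^r(m)=\chi(rm)$, has the no small submodules property. In particular, for every $m\in\mathbb{N}$, $\widehat{R}^m\cong\widehat{R^m}$ has the no small submodules property, both as a left and as a right topological $R$-module.
   Context: All topological groups are Hausdorff; rings are unital. $\widehat{M}$ is the group of continuous homomorphisms $M\to\mathbb{S}^1$ with the compact-open topology. A module has the no small submodules property if some neighbourhood of $0$ contains no nonzero submodule. *)

theory Defs
  imports "HOL-Analysis.Analysis" "HOL-Algebra.Algebra"
begin

definition topological_ring :: "('a, 'c) ring_scheme \<Rightarrow> 'a topology \<Rightarrow> bool" where
  "topological_ring R TR \<longleftrightarrow>
     ring R \<and> topspace TR = carrier R \<and> Hausdorff_space TR \<and>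
     continuous_map (prod_topology TR TR) TR (\<lambda>(x, y). x \<oplus>\<^bsub>R\<^esub> y) \<and>
     continuous_map TR TR (\<lambda>x. \<ominus>\<^bsub>R\<^esub> x) \<and>
     continuous_map (prod_topology TR TR) TR (\<lambda>(x, y). x \<otimes>\<^bsub>R\<^esub> y)"

text \<open>Left R-modules: M is an abelian group written as a HOL-Algebra monoid
(its operation is the module addition, its unit is 0), sm is the left scalar action.\<close>
definition left_module ::
  "('a, 'c) ring_scheme \<Rightarrow> ('b, 'd) monoid_scheme \<Rightarrow> ('a \<Rightarrow> 'b \<Rightarrow> 'b) \<Rightarrow> bool" where
  "left_module R M sm \<longleftrightarrow>
     ring R \<and> comm_group M \<and>
     (\<forall>r\<in>carrier R. \<forall>x\<in>carrier M. sm r x \<in> carrier M) \<and>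
     (\<forall>r\<in>carrier R. \<forall>x\<in>carrier M. \<forall>y\<in>carrier M.
         sm r (x \<otimes>\<^bsub>M\<^esub> y) = sm r x \<otimes>\<^bsub>M\<^esub> sm r y) \<and>
     (\<forall>r\<in>carrier R. \<forall>s\<in>carrier R. \<forall>x\<in>carrier M.
         sm (r \<oplus>\<^bsub>R\<^esub> s) x = sm r x \<otimes>\<^bsub>M\<^esub> sm s x) \<and>
     (\<forall>r\<in>carrier R. \<forall>s\<in>carrier R. \<forall>x\<in>carrier M.
         sm (r \<otimes>\<^bsub>R\<^esub> s) x = sm r (sm s x)) \<and>
     (\<forall>x\<in>carrier M. sm \<one>\<^bsub>R\<^esub> x = x)"

definition topological_left_module ::
  "('a, 'c) ring_scheme \<Rightarrow> 'a topology \<Rightarrow> ('b, 'd) monoid_scheme \<Rightarrow> ('a \<Rightarrow> 'b \<Rightarrow> 'b)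
     \<Rightarrow> 'b topology \<Rightarrow> bool" where
  "topological_left_module R TR M sm TM \<longleftrightarrow>
     topological_ring R TR \<and> left_module R M sm \<and>
     topspace TM = carrier M \<and> Hausdorff_space TM \<and>
     continuous_map (prod_topology TM TM) TM (\<lambda>(x, y). x \<otimes>\<^bsub>M\<^esub> y) \<and>
     continuous_map TM TM (\<lambda>x. inv\<^bsub>M\<^esub> x) \<and>
     continuous_map (prod_topology TR TM) TM (\<lambda>(r, x). sm r x)"

definition finitely_generated_module ::
  "('a, 'c) ring_scheme \<Rightarrow> ('b, 'd) monoid_scheme \<Rightarrow> ('a \<Rightarrow> 'b \<Rightarrow> 'b) \<Rightarrow> bool" where
  "finitely_generated_module R M sm \<longleftrightarrow>
     (\<exists>S. finite S \<and> S \<subseteq> carrier M \<and>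
        (\<forall>x\<in>carrier M. \<exists>c. (\<forall>s\<in>S. c s \<in> carrier R) \<and>
            x = finprod M (\<lambda>s. sm (c s) s) S))"

text \<open>Characters are normalised to the value 1
outside the carrier, so that the group operation is pointwise multiplication.\<close>
definition characters :: "('b, 'd) monoid_scheme \<Rightarrow> 'b topology \<Rightarrow> ('b \<Rightarrow> complex) set" where
  "characters M TM =
     {f. (\<forall>x\<in>carrier M. f x \<in> sphere 0 1) \<and>
          (\<forall>x\<in>carrier M. \<forall>y\<in>carrier M. f (x \<otimes>\<^bsub>M\<^esub> y) = f x * f y) \<and>
          continuous_map TM euclidean f \<and>
          (\<forall>x. x \<notin> carrier M \<longrightarrow> f x = 1)}"

definition trivial_character :: "('b, 'd) monoid_scheme \<Rightarrow> 'b \<Rightarrow> complex" where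
  "trivial_character M = (\<lambda>x. 1)"

text \<open>Compact-open topology on the dual: generated by the subbasic sets
{f. f(K) \<subseteq> U}, K compact in M, U open in the circle (equivalently in the plane).\<close>
definition dual_topology :: "('b, 'd) monoid_scheme \<Rightarrow> 'b topology \<Rightarrow> ('b \<Rightarrow> complex) topology" where
  "dual_topology M TM =
     topology_generated_by
       {{f \<in> characters M TM. f ` K \<subseteq> U} | K U. compactin TM K \<and> open U}"

definition dual_action ::
  "('b, 'd) monoid_scheme \<Rightarrow> ('a \<Rightarrow> 'b \<Rightarrow> 'b) \<Rightarrow> ('b \<Rightarrow> complex) \<Rightarrow> 'a \<Rightarrow> 'b \<Rightarrow> complex" where
  "dual_action M sm f r = (\<lambda>x. if x \<in> carrier M then f (sm r x) else 1)"

definition dual_submodule ::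
  "('a, 'c) ring_scheme \<Rightarrow> ('b, 'd) monoid_scheme \<Rightarrow> ('a \<Rightarrow> 'b \<Rightarrow> 'b) \<Rightarrow> 'b topology
     \<Rightarrow> ('b \<Rightarrow> complex) set \<Rightarrow> bool" where
  "dual_submodule R M sm TM N \<longleftrightarrow>
     N \<subseteq> characters M TM \<and> trivial_character M \<in> N \<and>
     (\<forall>f\<in>N. \<forall>g\<in>N. (\<lambda>x. f x * g x) \<in> N) \<and>
     (\<forall>f\<in>N. (\<lambda>x. inverse (f x)) \<in> N) \<and>
     (\<forall>f\<in>N. \<forall>r\<in>carrier R. dual_action M sm f r \<in> N)"

definition dual_has_NSS ::
  "('a, 'c) ring_scheme \<Rightarrow> ('b, 'd) monoid_scheme \<Rightarrow> ('a \<Rightarrow> 'b \<Rightarrow> 'b) \<Rightarrow> 'b topology \<Rightarrow> bool" where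
  "dual_has_NSS R M sm TM \<longleftrightarrow>
     (\<exists>V. (\<exists>W. openin (dual_topology M TM) W \<and> trivial_character M \<in> W \<and> W \<subseteq> V) \<and>
        (\<forall>N. dual_submodule R M sm TM N \<and> N \<subseteq> V \<longrightarrow> N = {trivial_character M}))"

end

theory Submission
  imports Defs
begin

lemma circle_sq_step:
  fixes w :: complex
  assumes "cmod w = 1" "Re w > 1/2"
  shows "1 - Re (w*w) \<ge> 3 * (1 - Re w)"
proof -
  have h: "(Re w)^2 + (Im w)^2 = 1" using cmod_power2[of w] assms(1) by simp
  have "Re (w*w) = Re w * Re w - Im w * Im w" by simp
  also have "\<dots> = 2 * (Re w * Re w) - 1" using h unfolding power2_eq_square by linarith
  finally have e: "1 - Re (w*w) = (1 - Re w) * (2 * (1 + Re w))" by (simp add: algebra_simps)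
  have a: "3 \<le> 2 * (1 + Re w)" using assms(2) by simp
  have b: "0 \<le> 1 - Re w"
    using assms(1) complex_Re_le_cmod[of w] by simp
  have "(1 - Re w) * 3 \<le> (1 - Re w) * (2 * (1 + Re w))" by (rule mult_left_mono[OF a b])
  then show ?thesis unfolding e by (simp add: mult.commute)
qed

lemma circle_group_trivial:
  fixes G :: "complex set"
  assumes G1: "\<forall>w\<in>G. cmod w = 1 \<and> Re w > 1/2" and G2: "\<forall>w\<in>G. w*w \<in> G" and w: "w \<in> G"
  shows "w = 1"
proof -
  have pw: "w^(2^k) \<in> G \<and> 1 - Re (w^(2^k)) \<ge> 3^k*(1 - Re w)" for k
  proof (induction k)
    case 0 then show ?case using w by simp
  next
    case (Suc k)
    define v where "v = w^(2^k)"
    have vG: "v \<in> G" and iv: "1 - Re v \<ge> 3^k*(1 - Re w)" using Suc unfolding v_def by auto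
    have "(2::nat)^Suc k = 2^k + 2^k" by simp
    then have e: "w^(2^Suc k) = v * v" unfolding v_def by (simp only: power_add)
    have c1: "cmod v = 1" and c2: "Re v > 1/2" using G1 vG by auto
    have "1 - Re (v * v) \<ge> 3 * (1 - Re v)" by (rule circle_sq_step[OF c1 c2])
    moreover have "3 * (1 - Re v) \<ge> 3 * (3^k*(1 - Re w))" using iv by simp
    ultimately have "1 - Re (v * v) \<ge> 3^Suc k * (1 - Re w)" by simp
    moreover have "v * v \<in> G" using G2 vG by blast
    ultimately show ?case unfolding e by blast
  qed
  have "\<not> 1 - Re w > 0"
  proof
    assume p: "1 - Re w > 0"
    obtain k where k: "1 / (1 - Re w) < 3^k" using real_arch_pow[of 3 "1 / (1 - Re w)"] by auto
    have "1 < 3^k * (1 - Re w)" using k p by (simp add: divide_less_eq)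
    moreover have "w^(2^k) \<in> G" using pw by blast
    then have "Re (w^(2^k)) > 1/2" using G1 by blast
    moreover have "1 - Re (w^(2^k)) \<ge> 3^k*(1 - Re w)" using pw by blast
    ultimately show False by linarith
  qed
  moreover have "Re w \<le> 1" using G1 w complex_Re_le_cmod[of w] by simp
  ultimately have r: "Re w = 1" by linarith
  have "(Re w)^2 + (Im w)^2 = 1" using G1 w cmod_power2[of w] by simp
  then have "Im w = 0" using r by simp
  thus ?thesis using r by (simp add: complex_eq_iff)
qed

theorem mainTheorem17:
  fixes R :: "('a, 'c) ring_scheme" and TR :: "'a topology"
    and M :: "('b, 'd) monoid_scheme" and sm :: "'a \<Rightarrow> 'b \<Rightarrow> 'b" and TM :: "'b topology"
  assumes "topological_left_module R TR M sm TM"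
    and "locally_compact_space TM"
    and "finitely_generated_module R M sm"
  shows "dual_has_NSS R M sm TM"
proof -
  have lm: "left_module R M sm" and top: "topspace TM = carrier M"
    using assms(1) unfolding topological_left_module_def by auto
  have rR: "ring R" and cg: "comm_group M" using lm unfolding left_module_def by auto
  have smc: "\<And>r x. r \<in> carrier R \<Longrightarrow> x \<in> carrier M \<Longrightarrow> sm r x \<in> carrier M"
    using lm unfolding left_module_def by auto
  have smadd: "\<And>r s x. r \<in> carrier R \<Longrightarrow> s \<in> carrier R \<Longrightarrow> x \<in> carrier M \<Longrightarrow>
      sm (r \<oplus>\<^bsub>R\<^esub> s) x = sm r x \<otimes>\<^bsub>M\<^esub> sm s x"
    using lm unfolding left_module_def by auto
  obtain S where S: "finite S" "S \<subseteq> carrier M"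
    and gen: "\<forall>x\<in>carrier M. \<exists>c. (\<forall>s\<in>S. c s \<in> carrier R) \<and> x = finprod M (\<lambda>s. sm (c s) s) S"
    using assms(3) unfolding finitely_generated_module_def by blast
  define U where "U = {z::complex. Re z > 1/2}"
  define W where "W = {f \<in> characters M TM. f ` S \<subseteq> U}"
  have Wopen: "openin (dual_topology M TM) W"
    unfolding dual_topology_def
  proof (rule topology_generated_by_Basis)
    have "compactin TM S" using finite_imp_compactin[of S TM] S top by simp
    moreover have "open U" unfolding U_def using open_halfspace_Re_gt[of "1/2"] by simp
    ultimately show "W \<in> {{f \<in> characters M TM. f ` K \<subseteq> U} | K U. compactin TM K \<and> open U}"
      unfolding W_def by (intro CollectI exI[of _ S] exI[of _ U] conjI refl)
  qed
  have triv_char: "trivial_character M \<in> characters M TM"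
    unfolding characters_def trivial_character_def by auto
  have trivW: "trivial_character M \<in> W"
    using triv_char unfolding W_def U_def trivial_character_def by auto
  show ?thesis
    unfolding dual_has_NSS_def
  proof (intro exI conjI allI impI)
    show "openin (dual_topology M TM) W" "trivial_character M \<in> W" "W \<subseteq> W"
      using Wopen trivW by auto
    fix N assume N: "dual_submodule R M sm TM N \<and> N \<subseteq> W"
    have NW: "N \<subseteq> W" and Nc: "N \<subseteq> characters M TM" and tN: "trivial_character M \<in> N"
      and Nact: "\<forall>f\<in>N. \<forall>r\<in>carrier R. dual_action M sm f r \<in> N"
      using N unfolding dual_submodule_def by auto
    have "f = trivial_character M" if fN: "f \<in> N" for f
    proof -
      have fc: "f \<in> characters M TM" using fN Nc by auto
      have fs: "\<And>x. x \<in> carrier M \<Longrightarrow> f x \<in> sphere 0 1"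
        and fm: "\<And>x y. x \<in> carrier M \<Longrightarrow> y \<in> carrier M \<Longrightarrow> f (x \<otimes>\<^bsub>M\<^esub> y) = f x * f y"
        and fo: "\<And>x. x \<notin> carrier M \<Longrightarrow> f x = 1"
        using fc unfolding characters_def by auto
      have ones: "\<And>r s. r \<in> carrier R \<Longrightarrow> s \<in> S \<Longrightarrow> f (sm r s) = 1"
      proof -
        fix r s assume r: "r \<in> carrier R" and s: "s \<in> S"
        have sM: "s \<in> carrier M" using s S by auto
        define G where "G = (\<lambda>t. f (sm t s)) ` carrier R"
        have "\<forall>w\<in>G. cmod w = 1 \<and> Re w > 1/2"
        proof
          fix w assume "w \<in> G"
          then obtain t where t: "t \<in> carrier R" "w = f (sm t s)" unfolding G_def by (rule imageE)
          have "dual_action M sm f t \<in> W" using Nact fN t NW by blast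
          hence "dual_action M sm f t s \<in> U" unfolding W_def using s by blast
          hence "Re (f (sm t s)) > 1/2" using sM unfolding dual_action_def U_def by simp
          moreover have "cmod (f (sm t s)) = 1" using fs[OF smc[OF t(1) sM]] by simp
          ultimately show "cmod w = 1 \<and> Re w > 1/2" unfolding t(2) by (rule conjI[rotated])
        qed
        moreover have "\<forall>w\<in>G. w*w \<in> G"
        proof
          fix w assume "w \<in> G"
          then obtain t where t: "t \<in> carrier R" "w = f (sm t s)" unfolding G_def by (rule imageE)
          have tt: "t \<oplus>\<^bsub>R\<^esub> t \<in> carrier R" by (rule ring.ring_simprules(1)[OF rR t(1) t(1)])
          have "f (sm (t \<oplus>\<^bsub>R\<^esub> t) s) = w * w"
            unfolding smadd[OF t(1) t(1) sM] t(2) by (rule fm[OF smc[OF t(1) sM] smc[OF t(1) sM]])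
          then have "w * w = f (sm (t \<oplus>\<^bsub>R\<^esub> t) s)" by (rule sym)
          then show "w*w \<in> G" unfolding G_def using tt by (rule image_eqI)
        qed
        moreover have "f (sm r s) \<in> G" unfolding G_def using r by (rule imageI)
        ultimately show "f (sm r s) = 1" by (rule circle_group_trivial)
      qed
      have f1: "f \<one>\<^bsub>M\<^esub> = 1"
      proof -
        have o: "\<one>\<^bsub>M\<^esub> \<in> carrier M" using cg by (simp add: comm_group.axioms(2) group.is_monoid monoid.one_closed)
        have "f \<one>\<^bsub>M\<^esub> = f \<one>\<^bsub>M\<^esub> * f \<one>\<^bsub>M\<^esub>"
        proof -
          have "\<one>\<^bsub>M\<^esub> \<otimes>\<^bsub>M\<^esub> \<one>\<^bsub>M\<^esub> = \<one>\<^bsub>M\<^esub>"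
            using monoid.l_one[OF group.is_monoid[OF comm_group.axioms(2)[OF cg]] o] .
          then show ?thesis using fm[OF o o] by simp
        qed
        moreover have "f \<one>\<^bsub>M\<^esub> \<noteq> 0" using fs[OF o] by auto
        ultimately show ?thesis by (metis mult_cancel_left2)
      qed
      have fp: "\<And>A. finite A \<Longrightarrow> A \<subseteq> S \<Longrightarrow> (\<forall>s\<in>A. c s \<in> carrier R) \<Longrightarrow>
                 f (finprod M (\<lambda>s. sm (c s) s) A) = 1" for c
      proof -
        fix A :: "'b set" assume "finite A"
        then show "A \<subseteq> S \<Longrightarrow> (\<forall>s\<in>A. c s \<in> carrier R) \<Longrightarrow> f (finprod M (\<lambda>s. sm (c s) s) A) = 1"
        proof (induction A rule: finite_induct)
          case empty
          have "finprod M (\<lambda>s. sm (c s) s) {} = \<one>\<^bsub>M\<^esub>"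
            by (rule comm_monoid.finprod_empty[OF comm_group.axioms(1)[OF cg]])
          then show ?case using f1 by simp
        next
          case (insert a A)
          have cm: "comm_monoid M" using cg by (simp add: comm_group.axioms(1))
          have fn: "(\<lambda>s. sm (c s) s) \<in> A \<rightarrow> carrier M" using insert S smc by auto
          have am: "sm (c a) a \<in> carrier M" using insert S smc by auto
          have e1: "finprod M (\<lambda>s. sm (c s) s) (insert a A) = sm (c a) a \<otimes>\<^bsub>M\<^esub> finprod M (\<lambda>s. sm (c s) s) A"
            using comm_monoid.finprod_insert[OF cm insert(1) insert(2) fn am] .
          have e2: "finprod M (\<lambda>s. sm (c s) s) A \<in> carrier M"
            using comm_monoid.finprod_closed[OF cm fn] .
          have "f (finprod M (\<lambda>s. sm (c s) s) (insert a A)) = f (sm (c a) a) * f (finprod M (\<lambda>s. sm (c s) s) A)"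
            unfolding e1 by (rule fm[OF am e2])
          moreover have "f (sm (c a) a) = 1" using ones insert.prems by blast
          moreover have "f (finprod M (\<lambda>s. sm (c s) s) A) = 1" using insert.IH insert.prems by blast
          ultimately show ?case by simp
        qed
      qed
      show ?thesis
      proof
        fix x
        show "f x = trivial_character M x"
        proof (cases "x \<in> carrier M")
          case True
          then obtain c where c1: "\<forall>s\<in>S. c s \<in> carrier R" and c2: "x = finprod M (\<lambda>s. sm (c s) s) S"
            using gen by blast
          have "f (finprod M (\<lambda>s. sm (c s) s) S) = 1" using fp[OF S(1) order_refl c1] .
          then show ?thesis using c2 unfolding trivial_character_def by simp
        next
          case False then show ?thesis using fo unfolding trivial_character_def by simp
        qed
      qed
    qed
    note fall = this
    show "N = {trivial_character M}"
    proof (intro equalityI subsetI)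
      fix g assume "g \<in> N" then have "g = trivial_character M" by (rule fall)
      then show "g \<in> {trivial_character M}" by simp
    next
      fix g assume "g \<in> {trivial_character M}" then show "g \<in> N" using tN by simp
    qed
  qed
qed

end
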